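(* Let $H$ be a real $d\times d$ matrix partitioned into blocks $(H_{ij})_{1\le i,j\le n}$ with $H_{ij}\in\mathbb{R}^{d_i\times d_j}$, $\sum_i d_i=d$. Let $S=(H+H^\top)/2$ be its symmetric part and $H_d=\bigoplus_i H_{ii}$ the block-diagonal matrix formed by its diagonal blocks. For a square matrix $A$ write $\lambda(A)=\mathrm{Re}(\mathrm{Spec}(A))$ for the set of real parts of its eigenvalues. Then the following implications hold: (1) $H\prec 0\Rightarrow \max\lambda(H)<0$; (2) $H\prec 0\Rightarrow \max\lambda(H_d)<0$; (3) $\max\lambda(H)<0\Rightarrow\min\lambda(H)<0$; (4) $\max\lambda(H_d)<0\Rightarrow\min\lambda(H_d)<0$; (5) $\max\lambda(H)<0\Rightarrow \min\lambda(H_d)<0$; (6) $\max\lambda(H_d)<0\Rightarrow\min\lambda(H)<0$; (7) $\min\lambda(H)<0\Rightarrow\min\lambda(S)<0$; (8) $\min\lambda(H_d)<0\Rightarrow\min\lambda(S)<0$. Moreover, none of these implications is an equivalence: for each of them there exists such a partitioned matrix $H$ for which the conclusion holds but the hypothesis fails.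
   Context: For a (not necessarily symmetric) real square matrix $H$, $H\prec 0$ means $u^\top H u<0$ for all nonzero $u$ (equivalently, the symmetric part of $H$ is negative definite). *)

theory Defs
  imports Complex_Main "Jordan_Normal_Form.Char_Poly"
begin

text \<open>Block partition of a d x d matrix given by the list ds = [d_1,...,d_n] of block sizes.\<close>

definition block_offset :: "nat list \<Rightarrow> nat \<Rightarrow> nat" where
  "block_offset ds i = sum_list (take i ds)"

definition same_block :: "nat list \<Rightarrow> nat \<Rightarrow> nat \<Rightarrow> bool" where
  "same_block ds r c \<longleftrightarrow> (\<exists>i<length ds.
      block_offset ds i \<le> r \<and> r < block_offset ds (Suc i) \<and>
      block_offset ds i \<le> c \<and> c < block_offset ds (Suc i))"

definition partitioned :: "nat list \<Rightarrow> real mat \<Rightarrow> bool" where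
  "partitioned ds H \<longleftrightarrow> ds \<noteq> [] \<and> (\<forall>k\<in>set ds. 0 < k) \<and>
     H \<in> carrier_mat (sum_list ds) (sum_list ds)"

definition block_diag_part :: "nat list \<Rightarrow> real mat \<Rightarrow> real mat" where
  "block_diag_part ds H = mat (dim_row H) (dim_col H)
     (\<lambda>(r, c). if same_block ds r c then H $$ (r, c) else 0)"

definition sym_part :: "real mat \<Rightarrow> real mat" where
  "sym_part H = (1/2 :: real) \<cdot>\<^sub>m (H + transpose_mat H)"

definition neg_def :: "real mat \<Rightarrow> bool" where
  "neg_def H \<longleftrightarrow> (\<forall>u \<in> carrier_vec (dim_row H). u \<noteq> 0\<^sub>v (dim_row H) \<longrightarrow> u \<bullet> (H *\<^sub>v u) < 0)"

definition spec :: "real mat \<Rightarrow> complex set" where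
  "spec A = {k. eigenvalue (map_mat complex_of_real A) k}"

definition lam :: "real mat \<Rightarrow> real set" where
  "lam A = Re ` spec A"

definition max_lam :: "real mat \<Rightarrow> real" where
  "max_lam A = Max (lam A)"

definition min_lam :: "real mat \<Rightarrow> real" where
  "min_lam A = Min (lam A)"

end

theory Submission imports Defs "Jordan_Normal_Form.Spectral_Radius" "Jordan_Normal_Form.Schur_Decomposition" "HOL-Analysis.Analysis" begin
no_notation vec_nth (infixl "$" 90)


lemma quad_min:
  fixes S :: "nat \<Rightarrow> nat \<Rightarrow> real" and n :: nat
  assumes n: "n > 0"
  shows "\<exists>x. (\<Sum>i<n. (x i)^2) = 1 \<and> (\<forall>y. (\<Sum>i<n. (y i)^2) = 1 \<longrightarrow>
     (\<Sum>i<n. \<Sum>j<n. x i * S i j * x j) \<le> (\<Sum>i<n. \<Sum>j<n. y i * S i j * y j))"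
proof -
  define T where "T = (\<lambda>i::nat. if i < n then {-1..1::real} else {0})"
  define K where "K = PiE UNIV T \<inter> {f. (\<Sum>i<n. (f i)^2) = 1}"
  define q where "q = (\<lambda>f::nat\<Rightarrow>real. (\<Sum>i<n. \<Sum>j<n. f i * S i j * f j))"
  have c1: "compact (PiE UNIV T)"
  proof -
    have "compactin (product_topology (\<lambda>i. euclidean) UNIV) (PiE UNIV T)"
      unfolding compactin_PiE by (auto simp: T_def)
    thus ?thesis by (simp add: euclidean_product_topology)
  qed
  have cs: "continuous_on UNIV (\<lambda>f::nat\<Rightarrow>real. (\<Sum>i<n. (f i)^2))"
    by (intro continuous_intros continuous_on_product_coordinates)
  have c2: "closed {f::nat\<Rightarrow>real. (\<Sum>i<n. (f i)^2) = 1}"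
    by (rule closed_Collect_eq[OF cs]) simp
  have cK: "compact K" unfolding K_def using c1 c2 by blast
  define e where "e = (\<lambda>i::nat. if i = 0 then 1 else 0::real)"
  have "e \<in> K" using n unfolding K_def T_def e_def
    by (auto simp: PiE_def extensional_def if_distrib[of "\<lambda>x. x^2"] sum.delta cong: if_cong)
  hence ne: "K \<noteq> {}" by auto
  have cq: "continuous_on K q" unfolding q_def
    by (intro continuous_intros continuous_on_subset[OF continuous_on_product_coordinates]) auto
  obtain x where xK: "x \<in> K" and xmin: "\<forall>y\<in>K. q x \<le> q y"
    using continuous_attains_inf[OF cK ne cq] by blast
  show ?thesis
  proof (intro exI conjI allI impI)
    show "(\<Sum>i<n. (x i)^2) = 1" using xK K_def by auto
    fix y :: "nat \<Rightarrow> real" assume y: "(\<Sum>i<n. (y i)^2) = 1"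
    define y' where "y' = (\<lambda>i. if i < n then y i else 0)"
    have b: "\<bar>y i\<bar> \<le> 1" if "i < n" for i
    proof -
      have "(y i)^2 \<le> (\<Sum>i<n. (y i)^2)"
        by (rule member_le_sum) (use that in auto)
      hence "(y i)^2 \<le> 1^2" using y by simp
      thus ?thesis using abs_le_square_iff[of "y i" 1] by simp
    qed
    have "y' \<in> K" unfolding K_def T_def y'_def using b y
      by (auto simp: PiE_def extensional_def abs_le_iff)
    hence "q x \<le> q y'" using xmin by auto
    also have "q y' = q y" unfolding q_def y'_def by (intro sum.cong refl) auto
    finally show "(\<Sum>i<n. \<Sum>j<n. x i * S i j * x j) \<le> (\<Sum>i<n. \<Sum>j<n. y i * S i j * y j)"
      unfolding q_def .
  qed
qed
lemma quad_expand:
  fixes S :: "nat \<Rightarrow> nat \<Rightarrow> real"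
  assumes sym: "\<And>i j. i < n \<Longrightarrow> j < n \<Longrightarrow> S i j = S j i"
  shows "(\<Sum>i<n. \<Sum>j<n. (x i + t * z i) * S i j * (x j + t * z j)) =
    (\<Sum>i<n. \<Sum>j<n. x i * S i j * x j) + 2 * t * (\<Sum>i<n. z i * (\<Sum>j<n. S i j * x j))
    + t^2 * (\<Sum>i<n. \<Sum>j<n. z i * S i j * z j)"
proof -
  have swap: "(\<Sum>i<n. \<Sum>j<n. x i * S i j * z j) = (\<Sum>i<n. \<Sum>j<n. z i * S i j * x j)"
  proof -
    have "(\<Sum>i<n. \<Sum>j<n. x i * S i j * z j) = (\<Sum>j<n. \<Sum>i<n. x i * S i j * z j)"
      by (rule sum.swap)
    also have "\<dots> = (\<Sum>j<n. \<Sum>i<n. z j * S j i * x i)"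
      by (intro sum.cong refl) (simp add: sym)
    finally show ?thesis .
  qed
  have "(\<Sum>i<n. \<Sum>j<n. (x i + t * z i) * S i j * (x j + t * z j)) =
     (\<Sum>i<n. \<Sum>j<n. x i * S i j * x j) + t * (\<Sum>i<n. \<Sum>j<n. z i * S i j * x j)
     + t * (\<Sum>i<n. \<Sum>j<n. x i * S i j * z j) + t^2 * (\<Sum>i<n. \<Sum>j<n. z i * S i j * z j)"
    by (simp add: sum.distrib sum_distrib_left algebra_simps power2_eq_square)
  also have "\<dots> = (\<Sum>i<n. \<Sum>j<n. x i * S i j * x j) + 2 * t * (\<Sum>i<n. \<Sum>j<n. z i * S i j * x j)
     + t^2 * (\<Sum>i<n. \<Sum>j<n. z i * S i j * z j)" unfolding swap by simp
  also have "(\<Sum>i<n. \<Sum>j<n. z i * S i j * x j) = (\<Sum>i<n. z i * (\<Sum>j<n. S i j * x j))"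
    by (simp add: sum_distrib_left mult.assoc)
  finally show ?thesis .
qed

lemma lin_quad_nonneg:
  fixes B C :: real
  assumes "\<And>t. 0 \<le> 2 * t * B + t^2 * C" and "0 \<le> C"
  shows "B = 0"
proof (rule ccontr)
  assume B: "B \<noteq> 0"
  define t where "t = - B / (C + 1)"
  have C1: "C + 1 > 0" using assms(2) by simp
  have "0 \<le> 2 * t * B + t^2 * C" by (rule assms(1))
  hence "0 \<le> (2 * t * B + t^2 * C) * (C + 1)^2" using C1 by simp
  also have "(2 * t * B + t^2 * C) * (C + 1)^2 = 2*B*(t*(C+1))*(C+1) + C*(t*(C+1))^2"
    by (simp add: algebra_simps power2_eq_square)
  also have "t * (C + 1) = - B" unfolding t_def using C1 by simp
  also have "2*B*(- B)*(C+1) + C*(- B)^2 = B^2 * (- C - 2)"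
    by (simp add: algebra_simps power2_eq_square)
  finally have "0 \<le> B^2 * (- C - 2)" .
  moreover have "B^2 > 0" using B by simp
  ultimately show False using assms(2) by (simp add: zero_le_mult_iff)
qed

lemma sym_neg_eig:
  fixes S :: "nat \<Rightarrow> nat \<Rightarrow> real"
  assumes sym: "\<And>i j. i < n \<Longrightarrow> j < n \<Longrightarrow> S i j = S j i"
  and w: "(\<Sum>i<n. \<Sum>j<n. w i * S i j * w j) < 0"
  shows "\<exists>m x. m < 0 \<and> (\<exists>i<n. x i \<noteq> 0) \<and> (\<forall>i<n. (\<Sum>j<n. S i j * x j) = m * x i)"
proof -
  define q where "q = (\<lambda>f::nat\<Rightarrow>real. (\<Sum>i<n. \<Sum>j<n. f i * S i j * f j))"
  define N where "N = (\<lambda>f::nat\<Rightarrow>real. (\<Sum>i<n. (f i)^2))"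
  have n: "n > 0" using w by (cases n) auto
  obtain x where Nx: "N x = 1" and xmin: "\<And>y. N y = 1 \<Longrightarrow> q x \<le> q y"
    using quad_min[OF n, of S] unfolding q_def N_def by blast
  define m where "m = q x"
  have N0: "q y = 0" if "N y = 0" for y
  proof -
    have "\<forall>i\<in>{..<n}. (y i)^2 = 0" using that unfolding N_def
      by (subst sum_nonneg_eq_0_iff[symmetric]) auto
    thus ?thesis unfolding q_def by simp
  qed
  have scale: "q (\<lambda>i. c * y i) = c^2 * q y" "N (\<lambda>i. c * y i) = c^2 * N y" for c y
    unfolding q_def N_def by (simp_all add: sum_distrib_left power2_eq_square algebra_simps)
  have Npos: "N y \<ge> 0" for y unfolding N_def by (simp add: sum_nonneg)
  have bound: "q y \<ge> m * N y" for y
  proof (cases "N y = 0")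
    case True thus ?thesis using N0 by simp
  next
    case False
    hence pos: "N y > 0" using Npos[of y] by simp
    define c where "c = 1 / sqrt (N y)"
    have c2: "c^2 = 1 / N y" unfolding c_def using pos by (simp add: power_divide)
    have "N (\<lambda>i. c * y i) = 1" using scale(2) c2 pos by simp
    hence "m \<le> c^2 * q y" using xmin scale(1) unfolding m_def by metis
    hence "m * N y \<le> c^2 * q y * N y" using pos by simp
    also have "\<dots> = q y" using c2 pos by simp
    finally show ?thesis .
  qed
  have mneg: "m < 0"
  proof -
    have "N w \<noteq> 0" using N0[of w] w unfolding q_def by auto
    hence "N w > 0" using Npos[of w] by simp
    moreover have "m * N w \<le> q w" by (rule bound)
    ultimately show ?thesis using w unfolding q_def by (smt (verit) mult_nonneg_nonneg)
  qed
  define z where "z = (\<lambda>i. (\<Sum>j<n. S i j * x j) - m * x i)"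
  define S' where "S' = (\<lambda>i j. S i j - (if i = j then m else 0))"
  have qS': "(\<Sum>i<n. \<Sum>j<n. f i * S' i j * f j) = q f - m * N f" for f
  proof -
    have e: "(\<Sum>j<n. f i * S' i j * f j) = (\<Sum>j<n. f i * S i j * f j) - (\<Sum>j<n. if i = j then m * f i * f j else 0)" for i
      unfolding S'_def sum_subtractf[symmetric] by (intro sum.cong refl) (auto simp: algebra_simps)
    have "(\<Sum>i<n. \<Sum>j<n. f i * S' i j * f j) = (\<Sum>i<n. (\<Sum>j<n. f i * S i j * f j) - m * (f i)^2)"
      unfolding e by (intro sum.cong refl) (simp add: sum.delta power2_eq_square)
    thus ?thesis unfolding q_def N_def by (simp add: sum_subtractf sum_distrib_left)
  qed
  have symS': "\<And>i j. i < n \<Longrightarrow> j < n \<Longrightarrow> S' i j = S' j i" unfolding S'_def using sym by auto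
  have S'x: "(\<Sum>j<n. S' i j * x j) = z i" if "i < n" for i
  proof -
    have "(\<Sum>j<n. S' i j * x j) = (\<Sum>j<n. S i j * x j) - (\<Sum>j<n. if i = j then m * x j else 0)"
      unfolding S'_def sum_subtractf[symmetric] by (intro sum.cong refl) (auto simp: algebra_simps)
    thus ?thesis unfolding z_def using that by (simp add: sum.delta)
  qed
  have r0: "(\<Sum>i<n. \<Sum>j<n. x i * S' i j * x j) = 0" unfolding qS' m_def Nx by simp
  have "0 \<le> 2 * t * (\<Sum>i<n. z i * z i) + t^2 * (\<Sum>i<n. \<Sum>j<n. z i * S' i j * z j)" for t
  proof -
    have "0 \<le> (\<Sum>i<n. \<Sum>j<n. (x i + t * z i) * S' i j * (x j + t * z j))"
      unfolding qS' using bound by simp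
    also have "\<dots> = 2 * t * (\<Sum>i<n. z i * (\<Sum>j<n. S' i j * x j))
      + t^2 * (\<Sum>i<n. \<Sum>j<n. z i * S' i j * z j)"
      using quad_expand[OF symS', where x=x and t=t and z=z] r0 by simp
    also have "(\<Sum>i<n. z i * (\<Sum>j<n. S' i j * x j)) = (\<Sum>i<n. z i * z i)"
      by (intro sum.cong refl) (simp add: S'x)
    finally show ?thesis .
  qed
  moreover have "0 \<le> (\<Sum>i<n. \<Sum>j<n. z i * S' i j * z j)" unfolding qS' using bound by simp
  ultimately have "(\<Sum>i<n. z i * z i) = 0" by (rule lin_quad_nonneg)
  hence z0: "\<forall>i\<in>{..<n}. z i * z i = 0" by (subst sum_nonneg_eq_0_iff[symmetric]) auto
  have "\<exists>i<n. x i \<noteq> 0"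
  proof (rule ccontr)
    assume "\<not> ?thesis"
    hence "N x = 0" unfolding N_def by simp
    thus False using Nx by simp
  qed
  moreover have "\<forall>i<n. (\<Sum>j<n. S i j * x j) = m * x i" using z0 unfolding z_def by auto
  ultimately show ?thesis using mneg by blast
qed
lemma eig_quad:
  fixes A :: "real mat"
  assumes A: "A \<in> carrier_mat n n"
  and ev: "eigenvalue (map_mat complex_of_real A) \<mu>"
  shows "\<exists>a b. (\<exists>i<n. a i \<noteq> 0 \<or> b i \<noteq> 0) \<and>
    (\<Sum>i<n. \<Sum>j<n. a i * A $$ (i,j) * a j) + (\<Sum>i<n. \<Sum>j<n. b i * A $$ (i,j) * b j)
     = Re \<mu> * (\<Sum>i<n. (a i)^2 + (b i)^2)"
proof -
  let ?C = "map_mat complex_of_real A"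
  from ev obtain v where v: "v \<in> carrier_vec n" "v \<noteq> 0\<^sub>v n" "?C *\<^sub>v v = \<mu> \<cdot>\<^sub>v v"
    unfolding eigenvalue_def eigenvector_def using A by auto
  define a where "a = (\<lambda>i. Re (v $ i))"
  define b where "b = (\<lambda>i. Im (v $ i))"
  have eq: "(\<Sum>j<n. complex_of_real (A $$ (i,j)) * v $ j) = \<mu> * v $ i" if i: "i < n" for i
  proof -
    have "(?C *\<^sub>v v) $ i = (\<mu> \<cdot>\<^sub>v v) $ i" using v(3) by simp
    thus ?thesis using i A v(1)
      by (simp add: mult_mat_vec_def scalar_prod_def row_def lessThan_atLeast0)
  qed
  have "(\<Sum>i<n. cnj (v $ i) * (\<Sum>j<n. complex_of_real (A $$ (i,j)) * v $ j))
     = (\<Sum>i<n. cnj (v $ i) * (\<mu> * v $ i))"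
    by (intro sum.cong refl) (simp add: eq)
  hence e1: "Re (\<Sum>i<n. cnj (v $ i) * (\<Sum>j<n. complex_of_real (A $$ (i,j)) * v $ j))
     = Re (\<Sum>i<n. cnj (v $ i) * (\<mu> * v $ i))" by simp
  have e2: "Re (\<Sum>i<n. cnj (v $ i) * (\<Sum>j<n. complex_of_real (A $$ (i,j)) * v $ j))
     = (\<Sum>i<n. \<Sum>j<n. a i * A $$ (i,j) * a j) + (\<Sum>i<n. \<Sum>j<n. b i * A $$ (i,j) * b j)"
  proof -
    have pt: "Re (cnj x * (complex_of_real r * y)) = (Re x * r * Re y) + (Im x * r * Im y)" for x y r
      by (simp add: algebra_simps)
    have "Re (\<Sum>i<n. cnj (v $ i) * (\<Sum>j<n. complex_of_real (A $$ (i,j)) * v $ j))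
      = (\<Sum>i<n. \<Sum>j<n. Re (cnj (v $ i) * (complex_of_real (A $$ (i,j)) * v $ j)))"
      by (simp only: Re_sum sum_distrib_left)
    also have "\<dots> = (\<Sum>i<n. \<Sum>j<n. a i * A $$ (i,j) * a j + b i * A $$ (i,j) * b j)"
      unfolding pt a_def b_def ..
    finally show ?thesis by (simp only: sum.distrib)
  qed
  have e3: "Re (\<Sum>i<n. cnj (v $ i) * (\<mu> * v $ i)) = Re \<mu> * (\<Sum>i<n. (a i)^2 + (b i)^2)"
  proof -
    have pt: "Re (cnj x * (m * x)) = Re m * ((Re x)^2 + (Im x)^2)" for x m
      by (simp add: algebra_simps power2_eq_square)
    show ?thesis unfolding Re_sum pt a_def b_def by (simp only: sum_distrib_left)
  qed
  have nz: "\<exists>i<n. a i \<noteq> 0 \<or> b i \<noteq> 0"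
  proof (rule ccontr)
    assume "\<not> ?thesis"
    hence "v = 0\<^sub>v n" using v(1) unfolding a_def b_def by (intro eq_vecI) (auto simp: complex_eq_iff)
    thus False using v(2) by simp
  qed
  have "(\<Sum>i<n. \<Sum>j<n. a i * A $$ (i,j) * a j) + (\<Sum>i<n. \<Sum>j<n. b i * A $$ (i,j) * b j)
     = Re \<mu> * (\<Sum>i<n. (a i)^2 + (b i)^2)" using e1 e2 e3 by simp
  thus ?thesis using nz by blast
qed
definition qf :: "real mat \<Rightarrow> (nat \<Rightarrow> real) \<Rightarrow> real" where
  "qf A f = (\<Sum>i<dim_row A. \<Sum>j<dim_row A. f i * A $$ (i,j) * f j)"

lemma quad_vec:
  assumes "H \<in> carrier_mat n n" "u \<in> carrier_vec n"
  shows "u \<bullet> (H *\<^sub>v u) = qf H (\<lambda>i. u $ i)"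
  using assms unfolding qf_def
  by (simp add: scalar_prod_def mult_mat_vec_def row_def lessThan_atLeast0 sum_distrib_left mult.assoc)

lemma spec_spectrum: "spec A = spectrum (map_mat complex_of_real A)"
  unfolding spec_def spectrum_def by simp

lemma lam_fin_ne:
  assumes "A \<in> carrier_mat n n" "n > 0"
  shows "finite (lam A)" "lam A \<noteq> {}"
proof -
  have C: "map_mat complex_of_real A \<in> carrier_mat n n" using assms by simp
  show "finite (lam A)" unfolding lam_def spec_spectrum using card_finite_spectrum(1)[OF C] by simp
  show "lam A \<noteq> {}" unfolding lam_def spec_spectrum using spectrum_non_empty[OF C assms(2)] by simp
qed

lemma max_lam_neg:
  assumes "A \<in> carrier_mat n n" "n > 0"
  shows "max_lam A < 0 \<longleftrightarrow> (\<forall>k\<in>spec A. Re k < 0)"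
  unfolding max_lam_def using lam_fin_ne[OF assms] by (simp add: lam_def)

lemma min_lam_neg:
  assumes "A \<in> carrier_mat n n" "n > 0"
  shows "min_lam A < 0 \<longleftrightarrow> (\<exists>k\<in>spec A. Re k < 0)"
  unfolding min_lam_def using lam_fin_ne[OF assms] by (simp add: lam_def Min_less_iff)

lemma max_min:
  assumes "A \<in> carrier_mat n n" "n > 0" "max_lam A < 0"
  shows "min_lam A < 0"
  using assms lam_fin_ne[OF assms(1,2)] unfolding max_lam_def min_lam_def
  by (meson Max_ge Min_in le_less_trans)

definition tr :: "'a::comm_ring_1 mat \<Rightarrow> 'a" where
  "tr M = (\<Sum>i<dim_row M. M $$ (i,i))"

lemma tr_comm:
  fixes X Y :: "'a::comm_ring_1 mat"
  assumes "X \<in> carrier_mat n n" "Y \<in> carrier_mat n n"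
  shows "tr (X * Y) = tr (Y * X)"
proof -
  have "tr (X * Y) = (\<Sum>i<n. \<Sum>k<n. X $$ (i,k) * Y $$ (k,i))"
    using assms unfolding tr_def by (simp add: scalar_prod_def lessThan_atLeast0)
  also have "\<dots> = (\<Sum>k<n. \<Sum>i<n. Y $$ (k,i) * X $$ (i,k))"
    by (subst sum.swap) (simp add: mult.commute)
  also have "\<dots> = tr (Y * X)"
    using assms unfolding tr_def by (simp add: scalar_prod_def lessThan_atLeast0)
  finally show ?thesis .
qed

lemma Re_sum_list: "Re (sum_list es) = sum_list (map Re es)"
  by (induction es) auto

lemma trace_eigs:
  fixes A :: "real mat"
  assumes A: "A \<in> carrier_mat n n"
  shows "\<exists>es. length es = n \<and> (\<forall>e\<in>set es. e \<in> spec A) \<and>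
     (\<Sum>i<n. A $$ (i,i)) = sum_list (map Re es)"
proof -
  define C where "C = map_mat complex_of_real A"
  have C: "C \<in> carrier_mat n n" using A unfolding C_def by simp
  obtain es where cp: "char_poly C = (\<Prod>a\<leftarrow>es. [:- a, 1:])" and len: "length es = n"
    using char_poly_factorized[OF C] by blast
  obtain B P Q where BPQ: "schur_decomposition C es = (B,P,Q)" by (cases "schur_decomposition C es") auto
  from schur_decomposition[OF C cp BPQ]
  have sim: "similar_mat_wit C B P Q" and diag: "diag_mat B = es" by auto
  from sim C have B: "B \<in> carrier_mat n n" and P: "P \<in> carrier_mat n n" and Q: "Q \<in> carrier_mat n n"
    and QP: "Q * P = 1\<^sub>m n" and CPBQ: "C = P * B * Q"
    unfolding similar_mat_wit_def by (auto simp: Let_def)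
  have "tr C = tr (P * (B * Q))" using CPBQ P B Q by (simp add: assoc_mult_mat)
  also have "\<dots> = tr ((B * Q) * P)" by (rule tr_comm[OF P]) (use B Q in auto)
  also have "\<dots> = tr B" using B Q P QP by (simp add: assoc_mult_mat)
  finally have trCB: "tr C = tr B" .
  have "tr B = sum_list (diag_mat B)" using B unfolding tr_def diag_mat_def
    by (simp add: sum_list_sum_nth lessThan_atLeast0)
  hence trC: "tr C = sum_list es" using trCB diag by simp
  have "(\<Sum>i<n. A $$ (i,i)) = Re (tr C)" unfolding tr_def C_def using A by (simp add: Re_sum)
  also have "\<dots> = sum_list (map Re es)" unfolding trC Re_sum_list ..
  finally have t: "(\<Sum>i<n. A $$ (i,i)) = sum_list (map Re es)" .
  have "e \<in> spec A" if "e \<in> set es" for e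
  proof -
    have "poly (char_poly C) e = 0" unfolding cp poly_prod_list using that
      by (simp add: prod_list_zero_iff)
    thus ?thesis unfolding spec_def C_def[symmetric] using eigenvalue_root_char_poly[OF C] by simp
  qed
  thus ?thesis using len t by blast
qed
lemma qf_cong: "(\<And>i. i < dim_row A \<Longrightarrow> f i = g i) \<Longrightarrow> qf A f = qf A g"
  unfolding qf_def by (intro sum.cong refl) auto

lemma neg_defD:
  assumes H: "H \<in> carrier_mat d d" and nd: "neg_def H" and f: "\<exists>i<d. f i \<noteq> 0"
  shows "qf H f < 0"
proof -
  define u where "u = Matrix.vec d f"
  have u: "u \<in> carrier_vec d" unfolding u_def by simp
  have "u \<noteq> 0\<^sub>v d"
  proof
    assume u0: "u = 0\<^sub>v d"
    obtain i where i: "i < d" "f i \<noteq> 0" using f by blast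
    hence "u $ i \<noteq> 0" unfolding u_def by simp
    thus False using u0 i by simp
  qed
  hence "u \<bullet> (H *\<^sub>v u) < 0" using nd u H unfolding neg_def_def by auto
  also have "u \<bullet> (H *\<^sub>v u) = qf H f" unfolding quad_vec[OF H u] using H
    by (intro qf_cong) (auto simp: u_def)
  finally show ?thesis .
qed

lemma negq_eigs:
  assumes H: "H \<in> carrier_mat d d" and nq: "\<forall>f. (\<exists>i<d. f i \<noteq> 0) \<longrightarrow> qf H f < 0"
  and k: "k \<in> spec H"
  shows "Re k < 0"
proof -
  obtain a b where nz: "\<exists>i<d. a i \<noteq> 0 \<or> b i \<noteq> 0" and
    eq: "qf H a + qf H b = Re k * (\<Sum>i<d. (a i)^2 + (b i)^2)"
    using eig_quad[OF H, of k] k H unfolding spec_def qf_def by auto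
  have le: "qf H g \<le> 0" for g
  proof (cases "\<exists>i<d. g i \<noteq> 0")
    case True thus ?thesis using nq by (simp add: less_imp_le)
  next
    case False
    hence "qf H g = qf H (\<lambda>_. 0)" using H by (intro qf_cong) auto
    thus ?thesis by (simp add: qf_def)
  qed
  have "qf H a + qf H b < 0"
    using nz nq le[of a] le[of b] by (smt (verit))
  moreover have "(\<Sum>i<d. (a i)^2 + (b i)^2) \<ge> 0" by (intro sum_nonneg) auto
  ultimately show ?thesis using eq by (smt (verit) mult_nonneg_nonneg)
qed

lemma eig_negq:
  assumes H: "H \<in> carrier_mat d d" and k: "k \<in> spec H" and r: "Re k < 0"
  shows "\<exists>f. qf H f < 0"
proof -
  obtain a b where nz: "\<exists>i<d. a i \<noteq> 0 \<or> b i \<noteq> 0" and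
    eq: "qf H a + qf H b = Re k * (\<Sum>i<d. (a i)^2 + (b i)^2)"
    using eig_quad[OF H, of k] k H unfolding spec_def qf_def by auto
  obtain i where i: "i < d" "a i \<noteq> 0 \<or> b i \<noteq> 0" using nz by blast
  have "(a i)^2 + (b i)^2 \<le> (\<Sum>i<d. (a i)^2 + (b i)^2)"
    by (rule member_le_sum) (use i in auto)
  moreover have "(a i)^2 + (b i)^2 > 0" using i(2) by (auto simp: add_pos_nonneg add_nonneg_pos)
  ultimately have "(\<Sum>i<d. (a i)^2 + (b i)^2) > 0" by linarith
  hence "qf H a + qf H b < 0" using eq r by (simp add: mult_neg_pos)
  thus ?thesis by (smt (verit))
qed

lemma qf_sym: "H \<in> carrier_mat d d \<Longrightarrow> qf (sym_part H) f = qf H f"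
proof -
  assume H: "H \<in> carrier_mat d d"
  have sw: "(\<Sum>i<d. \<Sum>j<d. f i * H $$ (j,i) * f j) = (\<Sum>i<d. \<Sum>j<d. f i * H $$ (i,j) * f j)"
    by (subst sum.swap) (simp add: mult.commute mult.left_commute)
  have "qf (sym_part H) f = (\<Sum>i<d. \<Sum>j<d. (f i * H $$ (i,j) * f j + f i * H $$ (j,i) * f j) / 2)"
    unfolding qf_def sym_part_def using H by (intro sum.cong refl) (auto simp: algebra_simps)
  also have "\<dots> = ((\<Sum>i<d. \<Sum>j<d. f i * H $$ (i,j) * f j) + (\<Sum>i<d. \<Sum>j<d. f i * H $$ (j,i) * f j)) / 2"
    by (simp add: sum_divide_distrib[symmetric] sum.distrib)
  also have "\<dots> = qf H f" unfolding sw qf_def using H by simp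
  finally show ?thesis .
qed

lemma negq_sym:
  assumes H: "H \<in> carrier_mat d d" and f: "qf H f < 0"
  shows "min_lam (sym_part H) < 0"
proof -
  define S where "S = sym_part H"
  have S: "S \<in> carrier_mat d d" unfolding S_def sym_part_def using H by simp
  have symS: "\<And>i j. i < d \<Longrightarrow> j < d \<Longrightarrow> S $$ (i,j) = S $$ (j,i)"
    unfolding S_def sym_part_def using H by auto
  have "qf S f < 0" unfolding S_def qf_sym[OF H] by (rule f)
  hence "(\<Sum>i<d. \<Sum>j<d. f i * (\<lambda>i j. S $$ (i,j)) i j * f j) < 0" unfolding qf_def using S by simp
  from sym_neg_eig[of d "\<lambda>i j. S $$ (i,j)", OF symS this]
  obtain m x where m: "m < 0" and nz: "\<exists>i<d. x i \<noteq> 0"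
    and ev: "\<forall>i<d. (\<Sum>j<d. S $$ (i,j) * x j) = m * x i" by auto
  have d: "d > 0" using nz by auto
  define v where "v = Matrix.vec d (\<lambda>i. complex_of_real (x i))"
  have "eigenvector (map_mat complex_of_real S) v (complex_of_real m)"
    unfolding eigenvector_def
  proof (intro conjI)
    show "v \<in> carrier_vec (dim_row (map_mat complex_of_real S))" using S unfolding v_def by simp
    show "v \<noteq> 0\<^sub>v (dim_row (map_mat complex_of_real S))"
    proof
      assume v0: "v = 0\<^sub>v (dim_row (map_mat complex_of_real S))"
      obtain i where i: "i < d" "x i \<noteq> 0" using nz by blast
      hence "v $ i \<noteq> 0" unfolding v_def by simp
      thus False using v0 i S by simp
    qed
    show "map_mat complex_of_real S *\<^sub>v v = complex_of_real m \<cdot>\<^sub>v v"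
    proof (rule eq_vecI)
      fix i assume "i < dim_vec (complex_of_real m \<cdot>\<^sub>v v)"
      hence i: "i < d" unfolding v_def by simp
      have "(map_mat complex_of_real S *\<^sub>v v) $ i = (\<Sum>j<d. complex_of_real (S $$ (i,j)) * complex_of_real (x j))"
        using S i unfolding v_def by (simp add: mult_mat_vec_def scalar_prod_def row_def lessThan_atLeast0)
      also have "\<dots> = complex_of_real (\<Sum>j<d. S $$ (i,j) * x j)" by simp
      also have "\<dots> = complex_of_real (m * x i)" using ev i by simp
      finally show "(map_mat complex_of_real S *\<^sub>v v) $ i = (complex_of_real m \<cdot>\<^sub>v v) $ i"
        using i unfolding v_def by simp
    qed (use S in \<open>simp add: v_def\<close>)
  qed
  hence "complex_of_real m \<in> spec S" unfolding spec_def eigenvalue_def by auto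
  thus ?thesis unfolding S_def[symmetric] using min_lam_neg[OF S d] m by force
qed
definition inb :: "nat list \<Rightarrow> nat \<Rightarrow> nat \<Rightarrow> bool" where
  "inb ds k r \<longleftrightarrow> block_offset ds k \<le> r \<and> r < block_offset ds (Suc k)"

lemma off_le_Suc: "block_offset ds k \<le> block_offset ds (Suc k)"
proof (cases "k < length ds")
  case True thus ?thesis unfolding block_offset_def by (simp add: take_Suc_conv_app_nth)
next
  case False thus ?thesis unfolding block_offset_def by simp
qed

lemma off_mono: "k \<le> l \<Longrightarrow> block_offset ds k \<le> block_offset ds l"
  by (induction l) (auto simp: le_Suc_eq intro: order_trans[OF _ off_le_Suc])

lemma inb_uniq: "inb ds k r \<Longrightarrow> inb ds l r \<Longrightarrow> k = l"
proof (rule ccontr)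
  assume a: "inb ds k r" "inb ds l r" "k \<noteq> l"
  show False
  proof (cases "k < l")
    case True
    hence "block_offset ds (Suc k) \<le> block_offset ds l" by (intro off_mono) simp
    thus False using a unfolding inb_def by simp
  next
    case False
    hence "block_offset ds (Suc l) \<le> block_offset ds k" using a(3) by (intro off_mono) simp
    thus False using a unfolding inb_def by simp
  qed
qed

lemma inb_cover: "r < sum_list ds \<Longrightarrow> \<exists>k<length ds. inb ds k r"
proof (induction ds arbitrary: r)
  case Nil thus ?case by simp
next
  case (Cons x xs)
  show ?case
  proof (cases "r < x")
    case True
    hence "inb (x # xs) 0 r" unfolding inb_def block_offset_def by simp
    thus ?thesis by auto
  next
    case False
    hence "r - x < sum_list xs" using Cons.prems by simp
    then obtain k where k: "k < length xs" "inb xs k (r - x)" using Cons.IH by blast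
    have "inb (x # xs) (Suc k) r" using k(2) False unfolding inb_def block_offset_def by auto
    thus ?thesis using k(1) by auto
  qed
qed

lemma same_block_inb: "same_block ds r c \<longleftrightarrow> (\<exists>k<length ds. inb ds k r \<and> inb ds k c)"
  unfolding same_block_def inb_def by auto

lemma sb_sum:
  "(\<Sum>k<length ds. if inb ds k i \<and> inb ds k j then (X::real) else 0) = (if same_block ds i j then X else 0)"
proof (cases "same_block ds i j")
  case True
  then obtain k0 where k0: "k0 < length ds" "inb ds k0 i" "inb ds k0 j" unfolding same_block_inb by blast
  have "(\<Sum>k<length ds. if inb ds k i \<and> inb ds k j then X else 0) = (\<Sum>k<length ds. if k = k0 then X else 0)"
    using k0 inb_uniq by (intro sum.cong refl) metis
  also have "\<dots> = X" using k0(1) by simp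
  finally show ?thesis using True by simp
next
  case False
  hence "\<And>k. k < length ds \<Longrightarrow> \<not> (inb ds k i \<and> inb ds k j)" unfolding same_block_inb by blast
  hence "(\<Sum>k<length ds. if inb ds k i \<and> inb ds k j then X else 0) = (\<Sum>k<length ds. 0)"
    by (intro sum.cong refl) auto
  thus ?thesis using False by simp
qed

lemma bd_carrier: "H \<in> carrier_mat d d \<Longrightarrow> block_diag_part ds H \<in> carrier_mat d d"
  unfolding block_diag_part_def by simp

lemma qf_bd:
  assumes H: "H \<in> carrier_mat d d"
  shows "qf (block_diag_part ds H) f = (\<Sum>k<length ds. qf H (\<lambda>i. if inb ds k i then f i else 0))"
proof -
  have "(\<Sum>k<length ds. qf H (\<lambda>i. if inb ds k i then f i else 0)) =
     (\<Sum>k<length ds. \<Sum>i<d. \<Sum>j<d. if inb ds k i \<and> inb ds k j then f i * H $$ (i,j) * f j else 0)"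
    unfolding qf_def using H by (intro sum.cong refl) auto
  also have "\<dots> = (\<Sum>i<d. \<Sum>j<d. \<Sum>k<length ds. if inb ds k i \<and> inb ds k j then f i * H $$ (i,j) * f j else 0)"
    by (subst sum.swap) (subst (2) sum.swap, rule refl)
  also have "\<dots> = (\<Sum>i<d. \<Sum>j<d. if same_block ds i j then f i * H $$ (i,j) * f j else 0)"
    unfolding sb_sum ..
  also have "\<dots> = qf (block_diag_part ds H) f"
    unfolding qf_def block_diag_part_def using H by (intro sum.cong refl) auto
  finally show ?thesis by simp
qed

lemma bd_diag:
  assumes H: "H \<in> carrier_mat d d" and d: "d = sum_list ds" and i: "i < d"
  shows "block_diag_part ds H $$ (i,i) = H $$ (i,i)"
proof -
  have "same_block ds i i" unfolding same_block_inb using inb_cover[of i ds] i d by auto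
  thus ?thesis unfolding block_diag_part_def using H i by simp
qed
lemma sum_list_neg: "xs \<noteq> [] \<Longrightarrow> (\<forall>x\<in>set xs. x < (0::real)) \<Longrightarrow> sum_list xs < 0"
proof (induction xs)
  case Nil thus ?case by simp
next
  case (Cons a xs) thus ?case by (cases "xs = []") auto
qed

lemma sum_list_neg_ex: "sum_list xs < (0::real) \<Longrightarrow> \<exists>x\<in>set xs. x < 0"
  using sum_list_nonneg[of xs] by force

lemma trace_neg1:
  assumes A: "A \<in> carrier_mat d d" and d: "d > 0" and all: "\<forall>k\<in>spec A. Re k < 0"
  shows "(\<Sum>i<d. A $$ (i,i)) < 0"
proof -
  obtain es where es: "length es = d" "\<forall>e\<in>set es. e \<in> spec A" "(\<Sum>i<d. A $$ (i,i)) = sum_list (map Re es)"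
    using trace_eigs[OF A] by blast
  have "sum_list (map Re es) < 0" using es(1,2) d all by (intro sum_list_neg) auto
  thus ?thesis using es(3) by simp
qed

lemma trace_neg2:
  assumes A: "A \<in> carrier_mat d d" and t: "(\<Sum>i<d. A $$ (i,i)) < 0"
  shows "\<exists>k\<in>spec A. Re k < 0"
proof -
  obtain es where es: "length es = d" "\<forall>e\<in>set es. e \<in> spec A" "(\<Sum>i<d. A $$ (i,i)) = sum_list (map Re es)"
    using trace_eigs[OF A] by blast
  have "\<exists>x\<in>set (map Re es). x < 0" using t es(3) by (intro sum_list_neg_ex) simp
  thus ?thesis using es(2) by auto
qed

lemma part1:
  assumes P: "partitioned ds H"
  shows "(neg_def H \<longrightarrow> max_lam H < 0) \<and>
      (neg_def H \<longrightarrow> max_lam (block_diag_part ds H) < 0) \<and>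
      (max_lam H < 0 \<longrightarrow> min_lam H < 0) \<and>
      (max_lam (block_diag_part ds H) < 0 \<longrightarrow> min_lam (block_diag_part ds H) < 0) \<and>
      (max_lam H < 0 \<longrightarrow> min_lam (block_diag_part ds H) < 0) \<and>
      (max_lam (block_diag_part ds H) < 0 \<longrightarrow> min_lam H < 0) \<and>
      (min_lam H < 0 \<longrightarrow> min_lam (sym_part H) < 0) \<and>
      (min_lam (block_diag_part ds H) < 0 \<longrightarrow> min_lam (sym_part H) < 0)"
proof -
  define d where "d = sum_list ds"
  define Hd where "Hd = block_diag_part ds H"
  have H: "H \<in> carrier_mat d d" using P unfolding partitioned_def d_def by simp
  have Hd: "Hd \<in> carrier_mat d d" unfolding Hd_def using bd_carrier[OF H] .
  have d: "d > 0"
  proof -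
    from P have "ds \<noteq> []" "\<forall>k\<in>set ds. 0 < k" unfolding partitioned_def by auto
    hence "0 < hd ds" "hd ds \<le> sum_list ds" by (auto simp: member_le_sum_list)
    thus ?thesis unfolding d_def by simp
  qed
  have c1: "neg_def H \<longrightarrow> max_lam H < 0"
    using negq_eigs[OF H] neg_defD[OF H] max_lam_neg[OF H d] by blast
  have c2: "neg_def H \<longrightarrow> max_lam Hd < 0"
  proof
    assume nd: "neg_def H"
    have le: "qf H g \<le> 0" for g
    proof (cases "\<exists>i<d. g i \<noteq> 0")
      case True thus ?thesis using neg_defD[OF H nd] by (simp add: less_imp_le)
    next
      case False
      hence "qf H g = qf H (\<lambda>_. 0)" using H by (intro qf_cong) auto
      thus ?thesis by (simp add: qf_def)
    qed
    have "qf Hd f < 0" if f: "\<exists>i<d. f i \<noteq> 0" for f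
    proof -
      obtain i where i: "i < d" "f i \<noteq> 0" using f by blast
      obtain k0 where k0: "k0 < length ds" "inb ds k0 i" using inb_cover[of i ds] i unfolding d_def by blast
      define g where "g = (\<lambda>k i. if inb ds k i then f i else 0)"
      have "\<exists>i<d. g k0 i \<noteq> 0" using i k0 unfolding g_def by auto
      hence "qf H (g k0) < 0" using neg_defD[OF H nd, of "g k0"] by blast
      moreover have "(\<Sum>k\<in>{..<length ds} - {k0}. qf H (g k)) \<le> 0" by (intro sum_nonpos le)
      moreover have "qf Hd f = qf H (g k0) + (\<Sum>k\<in>{..<length ds} - {k0}. qf H (g k))"
        unfolding Hd_def qf_bd[OF H] g_def using k0(1) by (subst sum.remove) auto
      ultimately show ?thesis by linarith
    qed
    thus "max_lam Hd < 0" using negq_eigs[OF Hd] max_lam_neg[OF Hd d] by blast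
  qed
  have c3: "max_lam H < 0 \<longrightarrow> min_lam H < 0" using max_min[OF H d] by blast
  have c4: "max_lam Hd < 0 \<longrightarrow> min_lam Hd < 0" using max_min[OF Hd d] by blast
  have tr_eq: "(\<Sum>i<d. Hd $$ (i,i)) = (\<Sum>i<d. H $$ (i,i))"
    unfolding Hd_def using bd_diag[OF H d_def] by simp
  have c5: "max_lam H < 0 \<longrightarrow> min_lam Hd < 0"
    using trace_neg1[OF H d] trace_neg2[OF Hd] tr_eq max_lam_neg[OF H d] min_lam_neg[OF Hd d] by auto
  have c6: "max_lam Hd < 0 \<longrightarrow> min_lam H < 0"
    using trace_neg1[OF Hd d] trace_neg2[OF H] tr_eq max_lam_neg[OF Hd d] min_lam_neg[OF H d] by auto
  have c7: "min_lam H < 0 \<longrightarrow> min_lam (sym_part H) < 0"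
    using min_lam_neg[OF H d] eig_negq[OF H] negq_sym[OF H] by blast
  have c8: "min_lam Hd < 0 \<longrightarrow> min_lam (sym_part H) < 0"
  proof
    assume "min_lam Hd < 0"
    then obtain f where "qf Hd f < 0" using min_lam_neg[OF Hd d] eig_negq[OF Hd] by blast
    hence "(\<Sum>k<length ds. qf H (\<lambda>i. if inb ds k i then f i else 0)) < 0"
      unfolding Hd_def qf_bd[OF H] .
    then obtain k where "qf H (\<lambda>i. if inb ds k i then f i else 0) < 0"
      using sum_nonneg[of "{..<length ds}" "\<lambda>k. qf H (\<lambda>i. if inb ds k i then f i else 0)"]
      by (meson linorder_not_less)
    thus "min_lam (sym_part H) < 0" using negq_sym[OF H] by blast
  qed
  show ?thesis using c1 c2 c3 c4 c5 c6 c7 c8 unfolding Hd_def by blast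
qed
lemma tri_spec:
  fixes A :: "real mat"
  assumes A: "A \<in> carrier_mat n n" and ut: "upper_triangular A"
  shows "spec A = complex_of_real ` set (diag_mat A)"
proof -
  define C where "C = map_mat complex_of_real A"
  have C: "C \<in> carrier_mat n n" using A unfolding C_def by simp
  have utC: "upper_triangular C" using ut A unfolding C_def upper_triangular_def by auto
  have dC: "diag_mat C = map complex_of_real (diag_mat A)" unfolding C_def diag_mat_def using A by simp
  have "spec A = {k. poly (char_poly C) k = 0}"
    unfolding spec_def C_def[symmetric] by (rule Collect_cong) (rule eigenvalue_root_char_poly[OF C])
  also have "\<dots> = set (diag_mat C)"
    unfolding char_poly_upper_triangular[OF C utC] poly_prod_list
    by (auto simp: prod_list_zero_iff)
  finally show ?thesis unfolding dC by simp
qed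

definition M1 :: "real mat" where
  "M1 = Matrix.mat 2 2 (\<lambda>(i,j). if i = j then -1 else if i = 0 \<and> j = 1 then 10 else 0)"
definition M2 :: "real mat" where
  "M2 = Matrix.mat 2 2 (\<lambda>(i,j). if i = j then (if i = 0 then -1 else 1) else 0)"
definition M3 :: "real mat" where
  "M3 = Matrix.mat 2 2 (\<lambda>(i,j). if i = j then 1 else if i = 0 \<and> j = 1 then 10 else 0)"

lemma M_carrier: "M1 \<in> carrier_mat 2 2" "M2 \<in> carrier_mat 2 2" "M3 \<in> carrier_mat 2 2"
  unfolding M1_def M2_def M3_def by auto

lemma M_part: "partitioned [2] M1" "partitioned [2] M2" "partitioned [2] M3"
  unfolding partitioned_def using M_carrier by auto

lemma bd2: assumes "M \<in> carrier_mat 2 2" shows "block_diag_part [2] M = M"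
proof (rule eq_matI)
  have sb: "same_block [2] r c" if "r < 2" "c < 2" for r c
    unfolding same_block_def block_offset_def using that by auto
  show "\<And>i j. i < dim_row M \<Longrightarrow> j < dim_col M \<Longrightarrow> block_diag_part [2] M $$ (i, j) = M $$ (i, j)"
    unfolding block_diag_part_def using assms sb by auto
qed (use assms in \<open>auto simp: block_diag_part_def\<close>)

lemma two_cases: "(i::nat) < 2 \<longleftrightarrow> i = 0 \<or> i = 1" by auto

lemma M_ut: "upper_triangular M1" "upper_triangular M2" "upper_triangular M3"
  unfolding upper_triangular_def M1_def M2_def M3_def by (auto simp: two_cases)

lemma upt2: "[0..<2] = [0::nat, 1]" by (simp add: upt_rec)

lemma M_lam: "lam M1 = {-1}" "lam M2 = {-1, 1}" "lam M3 = {1}"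
  unfolding lam_def tri_spec[OF M_carrier(1) M_ut(1)] tri_spec[OF M_carrier(2) M_ut(2)]
    tri_spec[OF M_carrier(3) M_ut(3)]
  by (auto simp: diag_mat_def M1_def M2_def M3_def upt2 image_image)

lemma sum2: "(\<Sum>i<2. f i) = f 0 + f (1::nat)"
  by (simp add: numeral_2_eq_2)

lemma M1_not_neg: "\<not> neg_def M1"
proof
  assume nd: "neg_def M1"
  have "\<exists>i<(2::nat). (\<lambda>_. (1::real)) i \<noteq> 0" by (rule exI[of _ 0]) simp
  hence "qf M1 (\<lambda>_. 1) < 0" using neg_defD[OF M_carrier(1) nd, of "\<lambda>_. 1"] by blast
  moreover have "qf M1 (\<lambda>_. 1) = 8" unfolding qf_def using M_carrier(1)
    by (simp add: sum2 M1_def)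
  ultimately show False by simp
qed

lemma M3_sym: "min_lam (sym_part M3) < 0"
proof (rule negq_sym[OF M_carrier(3)])
  show "qf M3 (\<lambda>i. if i = 0 then 1 else -1) < 0" unfolding qf_def using M_carrier(3)
    by (simp add: sum2 M3_def)
qed
lemma M_vals: "max_lam M1 < 0" "min_lam M2 < 0" "\<not> max_lam M2 < 0" "\<not> min_lam M3 < 0"
  unfolding max_lam_def min_lam_def M_lam by auto

lemma M_bd: "block_diag_part [2] M1 = M1" "block_diag_part [2] M2 = M2" "block_diag_part [2] M3 = M3"
  using bd2 M_carrier by auto

theorem proposition2:
  shows "(\<forall>ds H. partitioned ds H \<longrightarrow>
      (neg_def H \<longrightarrow> max_lam H < 0) \<and>
      (neg_def H \<longrightarrow> max_lam (block_diag_part ds H) < 0) \<and>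
      (max_lam H < 0 \<longrightarrow> min_lam H < 0) \<and>
      (max_lam (block_diag_part ds H) < 0 \<longrightarrow> min_lam (block_diag_part ds H) < 0) \<and>
      (max_lam H < 0 \<longrightarrow> min_lam (block_diag_part ds H) < 0) \<and>
      (max_lam (block_diag_part ds H) < 0 \<longrightarrow> min_lam H < 0) \<and>
      (min_lam H < 0 \<longrightarrow> min_lam (sym_part H) < 0) \<and>
      (min_lam (block_diag_part ds H) < 0 \<longrightarrow> min_lam (sym_part H) < 0))
   \<and> (\<exists>ds H. partitioned ds H \<and> max_lam H < 0 \<and> \<not> neg_def H)
   \<and> (\<exists>ds H. partitioned ds H \<and> max_lam (block_diag_part ds H) < 0 \<and> \<not> neg_def H)
   \<and> (\<exists>ds H. partitioned ds H \<and> min_lam H < 0 \<and> \<not> max_lam H < 0)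
   \<and> (\<exists>ds H. partitioned ds H \<and> min_lam (block_diag_part ds H) < 0 \<and>
                 \<not> max_lam (block_diag_part ds H) < 0)
   \<and> (\<exists>ds H. partitioned ds H \<and> min_lam (block_diag_part ds H) < 0 \<and> \<not> max_lam H < 0)
   \<and> (\<exists>ds H. partitioned ds H \<and> min_lam H < 0 \<and> \<not> max_lam (block_diag_part ds H) < 0)
   \<and> (\<exists>ds H. partitioned ds H \<and> min_lam (sym_part H) < 0 \<and> \<not> min_lam H < 0)
   \<and> (\<exists>ds H. partitioned ds H \<and> min_lam (sym_part H) < 0 \<and>
                 \<not> min_lam (block_diag_part ds H) < 0)"
  apply (intro conjI)
  subgoal using part1 by blast
  by (rule exI[of _ "[2]"], (rule exI[of _ M1] exI[of _ M2] exI[of _ M3]),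
     simp add: M_part M_bd M_vals M1_not_neg M3_sym; fail)+
end
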